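(* Let $n>1$ be an integer and $\lambda>1$. Let $G=BS(1,n)=\langle a,b\mid ba=a^nb\rangle$ and let $\Phi:G\times\mathbb R^2\to\mathbb R^2$ be the linear action determined by $f_a(x)=Ax$, $f_b(x)=Bx$, where $A=\begin{pmatrix}1&0\\1&1\end{pmatrix}$ and $B=\begin{pmatrix}\lambda&0\\0&n\lambda\end{pmatrix}$ (this is well defined since $BA=A^nB$), and $\mathbb R^2$ carries the Euclidean metric. Then: (i) if $\lambda\in(1,n]$, the action $\Phi$ does not have the shadowing property; (ii) if $\lambda>n$, the action $\Phi$ has the shadowing property.
   Context: An action of a group $G$ on a metric space $(\Omega,\mathrm{dist})$ is a map $\Phi:G\times\Omega\to\Omega$ such that each $f_g=\Phi(g,\cdot)$ is a homeomorphism, $\Phi(e,x)=x$, and $\Phi(g_1g_2,x)=\Phi(g_1,\Phi(g_2,x))$. Fix a finite symmetric generating set $S$ of $G$ (e.g. $S=\{a,b,a^{-1},b^{-1}\}$; the property below does not depend on this choice). For $d>0$, a family $\{y_g\}_{g\in G}\subset\Omega$ is a $d$-pseudotrajectory if $\mathrm{dist}(y_{sg},f_s(y_g))<d$ for all $s\in S$, $g\in G$. The action has the shadowing property if for every $\varepsilon>0$ there is $d>0$ such that for every $d$-pseudotrajectory $\{y_g\}_{g\in G}$ there is $x_e\in\Omega$ with $\mathrm{dist}(y_g,f_g(x_e))<\varepsilon$ for all $g\in G$. *)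

theory Defs
  imports "HOL-Analysis.Analysis" "HOL-Algebra.Generated_Groups"
begin

text \<open>G is (a copy of) the Baumslag-Solitar group BS(1,n) = < a, b | b a = a^n b >,
  with a, b the images of the two presentation generators.  This is expressed by the
  universal property of the presentation: G is generated by a and b, the relation holds,
  and for every group H and elements x, y of H satisfying y x = x^n y there is a
  homomorphism G -> H with a |-> x, b |-> y.  Since every group generated by two elements
  is countable, it suffices to quantify over groups whose elements are natural numbers.\<close>
definition is_BS1n :: "('g, 'm) monoid_scheme \<Rightarrow> nat \<Rightarrow> 'g \<Rightarrow> 'g \<Rightarrow> bool" where
  "is_BS1n G n a b \<longleftrightarrow>
     group G \<and> a \<in> carrier G \<and> b \<in> carrier G \<and>
     carrier G = generate G {a, b} \<and>
     b \<otimes>\<^bsub>G\<^esub> a = (a [^]\<^bsub>G\<^esub> n) \<otimes>\<^bsub>G\<^esub> b \<and>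
     (\<forall>(H :: nat monoid) x y. group H \<longrightarrow> x \<in> carrier H \<longrightarrow> y \<in> carrier H \<longrightarrow>
        y \<otimes>\<^bsub>H\<^esub> x = (x [^]\<^bsub>H\<^esub> n) \<otimes>\<^bsub>H\<^esub> y \<longrightarrow>
        (\<exists>h \<in> hom G H. h a = x \<and> h b = y))"

definition group_action_on :: "('g, 'm) monoid_scheme \<Rightarrow> ('g \<Rightarrow> 'x::metric_space \<Rightarrow> 'x) \<Rightarrow> bool" where
  "group_action_on G \<Phi> \<longleftrightarrow>
     (\<forall>g \<in> carrier G. \<exists>h. homeomorphism UNIV UNIV (\<Phi> g) h) \<and>
     (\<forall>x. \<Phi> \<one>\<^bsub>G\<^esub> x = x) \<and>
     (\<forall>g1 \<in> carrier G. \<forall>g2 \<in> carrier G. \<forall>x. \<Phi> (g1 \<otimes>\<^bsub>G\<^esub> g2) x = \<Phi> g1 (\<Phi> g2 x))"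

definition pseudotrajectory ::
  "('g, 'm) monoid_scheme \<Rightarrow> 'g set \<Rightarrow> ('g \<Rightarrow> 'x::metric_space \<Rightarrow> 'x) \<Rightarrow> real \<Rightarrow> ('g \<Rightarrow> 'x) \<Rightarrow> bool" where
  "pseudotrajectory G S \<Phi> d y \<longleftrightarrow>
     (\<forall>s \<in> S. \<forall>g \<in> carrier G. dist (y (s \<otimes>\<^bsub>G\<^esub> g)) (\<Phi> s (y g)) < d)"

definition shadowing_property ::
  "('g, 'm) monoid_scheme \<Rightarrow> 'g set \<Rightarrow> ('g \<Rightarrow> 'x::metric_space \<Rightarrow> 'x) \<Rightarrow> bool" where
  "shadowing_property G S \<Phi> \<longleftrightarrow>
     (\<forall>\<epsilon>>0. \<exists>d>0. \<forall>y. pseudotrajectory G S \<Phi> d y \<longrightarrow>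
        (\<exists>x. \<forall>g \<in> carrier G. dist (y g) (\<Phi> g x) < \<epsilon>))"

definition matA :: "real^2^2" where
  "matA = vector [vector [1, 0], vector [1, 1]]"

definition matB :: "real \<Rightarrow> nat \<Rightarrow> real^2^2" where
  "matB l n = vector [vector [l, 0], vector [0, real n * l]]"

end

theory Submission
  imports Defs
begin

lemma mvt_bound:
  fixes f f' :: "real \<Rightarrow> real"
  assumes der: "\<And>x. DERIV f x :> f' x" and bd: "\<And>z. \<bar>z\<bar> \<le> \<bar>t\<bar> \<Longrightarrow> \<bar>f' z\<bar> \<le> C"
  shows "\<bar>f t - f 0\<bar> \<le> C * \<bar>t\<bar>"
proof (cases "t = 0")
  case True then show ?thesis by simp
next
  case False
  show ?thesis
  proof (cases "t > 0")
    case True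
    obtain z where z: "0 < z" "z < t" "f t - f 0 = (t - 0) * f' z" using MVT2[OF True der] by blast
    have "\<bar>f' z\<bar> \<le> C" using bd z by auto
    moreover have "\<bar>f t - f 0\<bar> = \<bar>f' z\<bar> * \<bar>t\<bar>" using z by (simp add: abs_mult)
    ultimately show ?thesis by (simp add: mult_right_mono)
  next
    case f2: False
    then have "t < 0" using False by auto
    obtain z where z: "t < z" "z < 0" "f 0 - f t = (0 - t) * f' z" using MVT2[OF \<open>t<0\<close> der] by blast
    have "\<bar>f' z\<bar> \<le> C" using bd z by auto
    moreover have "\<bar>f t - f 0\<bar> = \<bar>f' z\<bar> * \<bar>t\<bar>" using z
      by (metis abs_minus_commute abs_mult diff_0 abs_minus_cancel mult.commute)
    ultimately show ?thesis by (simp add: mult_right_mono)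
  qed
qed

lemma cos_lip: fixes s t :: real shows "\<bar>cos (s + t) - cos s\<bar> \<le> \<bar>t\<bar>"
proof -
  have "\<bar>(\<lambda>t. cos (s+t)) t - (\<lambda>t. cos (s+t)) 0\<bar> \<le> 1 * \<bar>t\<bar>"
  proof (rule mvt_bound[where f'="\<lambda>t. - sin (s+t)"])
    show "\<And>x. ((\<lambda>t. cos (s + t)) has_real_derivative - sin (s + x)) (at x)"
      by (auto intro!: derivative_eq_intros)
  qed simp
  then show ?thesis by simp
qed

lemma sin_taylor: fixes s t :: real shows "\<bar>sin (s + t) - sin s - t * cos s\<bar> \<le> t^2"
proof -
  have "\<bar>(\<lambda>t. sin (s+t) - sin s - t * cos s) t - (\<lambda>t. sin (s+t) - sin s - t * cos s) 0\<bar> \<le> \<bar>t\<bar> * \<bar>t\<bar>"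
  proof (rule mvt_bound[where f'="\<lambda>t. cos (s+t) - cos s"])
    show "\<And>x. ((\<lambda>t. sin (s+t) - sin s - t * cos s) has_real_derivative cos (s+x) - cos s) (at x)"
      by (auto intro!: derivative_eq_intros)
    show "\<And>z. \<bar>z\<bar> \<le> \<bar>t\<bar> \<Longrightarrow> \<bar>cos (s + z) - cos s\<bar> \<le> \<bar>t\<bar>"
      using cos_lip order.trans by blast
  qed
  then show ?thesis by (simp add: power2_eq_square abs_mult)
qed
lemma matA_mult: "matA *v x = vector [x$1, x$1 + x$2]"
  unfolding matA_def by (simp add: vec_eq_iff forall_2 matrix_vector_mult_def sum_2)
lemma matB_mult: "matB l n *v x = vector [l * x$1, real n * l * x$2]"
  unfolding matB_def by (simp add: vec_eq_iff forall_2 matrix_vector_mult_def sum_2)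
lemma norm2_le: "norm (x::real^2) \<le> \<bar>x$1\<bar> + \<bar>x$2\<bar>"
  unfolding norm_vec_def using L2_set_le_sum_abs[of "\<lambda>i. norm (x$i)" UNIV] by (simp add: sum_2)
lemma vec2_eq: "(x::real^2) = y \<longleftrightarrow> x$1 = y$1 \<and> x$2 = y$2"
  by (simp add: vec_eq_iff forall_2)


lemma est:
  fixes P Q h s t :: real
  assumes P: "P > 0" and h: "h > 0" and Q: "Q > 0" and QhP: "Q * h = P" and t: "\<bar>t\<bar> = h"
    and cases: "(P * h \<le> 1) \<or> (P \<le> 1 \<and> Q \<le> 1)"
  shows "P * \<bar>cos (s + t) - cos s\<bar> \<le> 2" and "Q * \<bar>sin (s + t) - sin s - t * cos s\<bar> \<le> 3"
proof -
  have c2: "\<bar>cos (s + t) - cos s\<bar> \<le> 2" using abs_cos_le_one[of "s+t"] abs_cos_le_one[of s] by linarith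
  have s3: "\<bar>sin (s + t) - sin s - t * cos s\<bar> \<le> 2 + h"
  proof -
    have "\<bar>t * cos s\<bar> \<le> h" using t abs_cos_le_one[of s] by (simp add: abs_mult mult_left_le)
    then show ?thesis using abs_sin_le_one[of "s+t"] abs_sin_le_one[of s] by linarith
  qed
  have Qh2: "Q * h^2 = P * h" using QhP by (simp add: power2_eq_square)
  show "P * \<bar>cos (s + t) - cos s\<bar> \<le> 2"
  proof (cases "P * h \<le> 1")
    case True
    have "P * \<bar>cos (s + t) - cos s\<bar> \<le> P * h" using cos_lip[of s t] t P by (simp add: mult_left_mono)
    then show ?thesis using True by linarith
  next
    case False
    then have "P \<le> 1" using cases by auto
    then show ?thesis using c2 P mult_mono[of P 1 "\<bar>cos (s + t) - cos s\<bar>" 2] by auto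
  qed
  show "Q * \<bar>sin (s + t) - sin s - t * cos s\<bar> \<le> 3"
  proof (cases "P * h \<le> 1")
    case True
    have "Q * \<bar>sin (s + t) - sin s - t * cos s\<bar> \<le> Q * t^2" using sin_taylor[of s t] Q by (simp add: mult_left_mono)
    also have "\<dots> = P * h" using Qh2 t by (metis power2_abs)
    finally show ?thesis using True by linarith
  next
    case False
    then have PQ: "P \<le> 1" "Q \<le> 1" using cases by auto
    have "Q * \<bar>sin (s + t) - sin s - t * cos s\<bar> \<le> Q * (2 + h)" using s3 Q by (simp add: mult_left_mono)
    also have "\<dots> = 2 * Q + P" using QhP by (simp add: algebra_simps)
    finally show ?thesis using PQ by linarith
  qed
qed

locale bs = group G for G :: "('g,'m) monoid_scheme" (structure) +
  fixes n :: nat and lam :: real and a b :: 'g and \<Phi> :: "'g \<Rightarrow> real^2 \<Rightarrow> real^2"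
  assumes n1: "n > 1" and lam1: "lam > 1" and BS: "is_BS1n G n a b" and act: "group_action_on G \<Phi>"
    and Pa: "\<And>x. \<Phi> a x = matA *v x" and Pb: "\<And>x. \<Phi> b x = matB lam n *v x"
begin

lemma aC: "a \<in> carrier G" and bC: "b \<in> carrier G" and gen: "carrier G = generate G {a,b}"
  and rel: "b \<otimes> a = (a [^] n) \<otimes> b"
  using BS unfolding is_BS1n_def by auto

lemma Phi_one: "\<Phi> \<one> x = x" using act unfolding group_action_on_def by auto
lemma Phi_mult: "g1 \<in> carrier G \<Longrightarrow> g2 \<in> carrier G \<Longrightarrow> \<Phi> (g1 \<otimes> g2) x = \<Phi> g1 (\<Phi> g2 x)"
  using act unfolding group_action_on_def by auto
lemma Phi_inv_left: "g \<in> carrier G \<Longrightarrow> \<Phi> (inv g) (\<Phi> g x) = x"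
  by (metis Phi_mult Phi_one inv_closed l_inv)

lemma Phi_a: "\<Phi> a x = vector [x$1, x$1 + x$2]" by (simp add: Pa matA_mult)
lemma Phi_b: "\<Phi> b x = vector [lam * x$1, real n * lam * x$2]" by (simp add: Pb matB_mult)
lemma Phi_inva: "\<Phi> (inv a) x = vector [x$1, x$2 - x$1]"
proof -
  have "\<Phi> a (vector [x$1, x$2 - x$1]) = x" by (simp add: Phi_a vec2_eq)
  then show ?thesis using Phi_inv_left[OF aC] by metis
qed
lemma Phi_invb: "\<Phi> (inv b) x = vector [x$1 / lam, x$2 / (real n * lam)]"
proof -
  have "\<Phi> b (vector [x$1 / lam, x$2 / (real n * lam)]) = x" using n1 lam1 by (simp add: Phi_b vec2_eq)
  then show ?thesis using Phi_inv_left[OF bC] by metis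
qed

lemma gen_induct:
  assumes "P \<one>" "P a" "P b" "P (inv a)" "P (inv b)"
    and "\<And>g1 g2. g1 \<in> carrier G \<Longrightarrow> g2 \<in> carrier G \<Longrightarrow> P g1 \<Longrightarrow> P g2 \<Longrightarrow> P (g1 \<otimes> g2)"
    and "g \<in> carrier G"
  shows "P g"
proof -
  have "g \<in> generate G {a,b}" using assms(7) gen by simp
  then have "g \<in> carrier G \<and> P g"
    by (induction rule: generate.induct) (use assms aC bC in auto)
  then show ?thesis by simp
qed

lemma ba_pow: "b \<otimes> a [^] (m::nat) = a [^] (n*m) \<otimes> b"
proof (induction m)
  case 0 then show ?case using bC by simp
next
  case (Suc m)
  have "b \<otimes> a [^] Suc m = (b \<otimes> a [^] m) \<otimes> a" using aC bC by (simp add: m_assoc)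
  also have "\<dots> = a [^] (n*m) \<otimes> (b \<otimes> a)" using Suc aC bC by (simp add: m_assoc)
  also have "\<dots> = (a [^] (n*m) \<otimes> a [^] n) \<otimes> b" using rel aC bC by (simp add: m_assoc)
  also have "\<dots> = a [^] (n * Suc m) \<otimes> b" using aC by (simp add: nat_pow_mult add.commute)
  finally show ?case .
qed

lemma bj_a: "b [^] (j::nat) \<otimes> a = a [^] (n^j) \<otimes> b [^] j"
proof (induction j)
  case 0 then show ?case using aC by simp
next
  case (Suc j)
  have "b [^] Suc j \<otimes> a = b \<otimes> (b [^] j \<otimes> a)" using aC bC by (metis nat_pow_Suc2 m_assoc nat_pow_closed)
  also have "\<dots> = (b \<otimes> a [^] (n^j)) \<otimes> b [^] j" using Suc aC bC by (simp add: m_assoc)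
  also have "\<dots> = a [^] (n^Suc j) \<otimes> (b \<otimes> b [^] j)" using aC bC by (simp add: ba_pow m_assoc)
  also have "\<dots> = a [^] (n^Suc j) \<otimes> b [^] Suc j" using bC by (metis nat_pow_Suc2)
  finally show ?case .
qed

definition Bi :: "nat \<Rightarrow> real^2 \<Rightarrow> real^2" where
  "Bi j v = vector [v$1 / lam^j, v$2 / (real n * lam)^j]"
definition Ap :: "nat \<Rightarrow> real^2 \<Rightarrow> real^2" where
  "Ap m v = vector [v$1, real m * v$1 + v$2]"

lemma Bi_norm: "norm (Bi j v) \<le> \<bar>v$1\<bar> / lam^j + \<bar>v$2\<bar> / (real n * lam)^j"
  using norm2_le[of "Bi j v"] lam1 n1 by (simp add: Bi_def abs_divide)

lemma Bi_norm2: "norm (Bi j v) \<le> 2 * norm v / lam^j"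
proof -
  have l: "lam^j \<le> (real n * lam)^j" using n1 lam1 by (intro power_mono) auto
  have p: "0 < lam^j" using lam1 by simp
  have "\<bar>v$2\<bar> / (real n * lam)^j \<le> \<bar>v$2\<bar> / lam^j" using l p by (intro divide_left_mono) auto
  also have "\<dots> \<le> norm v / lam^j" using p by (intro divide_right_mono component_le_norm_cart) auto
  finally have "\<bar>v$2\<bar> / (real n * lam)^j \<le> norm v / lam^j" .
  moreover have "\<bar>v$1\<bar> / lam^j \<le> norm v / lam^j" using p by (intro divide_right_mono component_le_norm_cart) auto
  ultimately show ?thesis using Bi_norm[of j v] by simp
qed

lemma Bi_diff: "Bi j (v - w) = Bi j v - Bi j w"
  by (simp add: Bi_def vec2_eq diff_divide_distrib)
lemma Bi_0: "Bi 0 v = v" by (simp add: Bi_def vec2_eq)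
lemma Bi_Suc: "Bi (Suc j) (\<Phi> b v) = Bi j v"
  using lam1 n1 by (simp add: Bi_def vec2_eq Phi_b)
lemma Phi_b_Bi: "\<Phi> b (Bi (Suc j) v) = Bi j v"
  using lam1 n1 by (simp add: Bi_def vec2_eq Phi_b)
lemma Phi_a_Bi: "\<Phi> a (Bi j v) = Bi j (Ap (n^j) v)"
  using lam1 n1 by (simp add: Bi_def Ap_def vec2_eq Phi_a power_mult_distrib add_divide_distrib)

context
  fixes y :: "'g \<Rightarrow> real^2" and d :: real
  assumes dpos: "d > 0"
    and ya: "\<And>g. g \<in> carrier G \<Longrightarrow> norm (y (a \<otimes> g) - \<Phi> a (y g)) < d"
    and yb: "\<And>g. g \<in> carrier G \<Longrightarrow> norm (y (b \<otimes> g) - \<Phi> b (y g)) < d"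
begin

definition u :: "'g \<Rightarrow> nat \<Rightarrow> real^2" where "u g j = Bi j (y (b [^] j \<otimes> g))"
definition D :: "'g \<Rightarrow> nat \<Rightarrow> real^2" where "D g i = u g (Suc i) - u g i"
definition xx :: "'g \<Rightarrow> real^2" where "xx g = y g + suminf (D g)"

lemma D_bound: assumes "g \<in> carrier G" shows "norm (D g i) \<le> 2 * d / lam * (1/lam)^i"
proof -
  define h where "h = b [^] i \<otimes> g"
  have hC: "h \<in> carrier G" using assms bC by (simp add: h_def)
  have e: "b [^] Suc i \<otimes> g = b \<otimes> h" using assms bC unfolding h_def by (metis nat_pow_Suc2 m_assoc nat_pow_closed)
  have "D g i = Bi (Suc i) (y (b \<otimes> h) - \<Phi> b (y h))"
    unfolding D_def u_def e Bi_diff Bi_Suc by (simp add: h_def)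
  then have "norm (D g i) \<le> 2 * norm (y (b \<otimes> h) - \<Phi> b (y h)) / lam ^ Suc i" using Bi_norm2[of "Suc i"] by metis
  also have "\<dots> \<le> 2 * d / lam ^ Suc i" using yb[OF hC] lam1 by (intro divide_right_mono) auto
  also have "\<dots> = 2 * d / lam * (1/lam)^i" by (simp add: power_divide)
  finally show ?thesis .
qed

lemma bound_summable: "summable (\<lambda>i. 2 * d / lam * (1/lam)^i)"
  using lam1 by (intro summable_mult summable_geometric) auto

lemma D_summable: "g \<in> carrier G \<Longrightarrow> summable (D g)"
  by (rule summable_comparison_test'[OF bound_summable]) (rule D_bound)

lemma u0: "g \<in> carrier G \<Longrightarrow> u g 0 = y g" by (simp add: u_def Bi_0)

lemma u_conv: assumes "g \<in> carrier G" shows "u g \<longlonglongrightarrow> xx g"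
proof -
  have "(\<lambda>j. u g 0 + (\<Sum>i<j. D g i)) \<longlonglongrightarrow> u g 0 + suminf (D g)"
    by (intro tendsto_add tendsto_const summable_LIMSEQ D_summable assms)
  moreover have "(\<lambda>j. u g 0 + (\<Sum>i<j. D g i)) = u g" unfolding D_def sum_lessThan_telescope by auto
  ultimately show ?thesis using u0[OF assms] by (simp add: xx_def)
qed

lemma xx_close: assumes "g \<in> carrier G" shows "norm (xx g - y g) \<le> 2 * d / (lam - 1)"
proof -
  have "norm (suminf (D g)) \<le> (\<Sum>i. 2 * d / lam * (1/lam)^i)"
    by (rule norm_suminf_le[OF D_bound[OF assms] bound_summable])
  also have "\<dots> = 2 * d / lam * (1 / (1 - 1/lam))" using lam1 by (subst suminf_mult) (simp_all add: suminf_geometric)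
  also have "\<dots> = 2 * d / (lam - 1)" using lam1 by (simp add: field_simps)
  finally show ?thesis by (simp add: xx_def)
qed

lemma xx_b: assumes "g \<in> carrier G" shows "xx (b \<otimes> g) = \<Phi> b (xx g)"
proof -
  have bg: "b \<otimes> g \<in> carrier G" using assms bC by simp
  have "u (b \<otimes> g) = (\<lambda>j. \<Phi> b (u g (Suc j)))"
  proof
    fix j
    have "b [^] j \<otimes> (b \<otimes> g) = b [^] Suc j \<otimes> g" using assms bC by (simp add: m_assoc)
    then show "u (b \<otimes> g) j = \<Phi> b (u g (Suc j))" by (simp add: u_def Phi_b_Bi)
  qed
  moreover have "(\<lambda>j. \<Phi> b (u g (Suc j))) \<longlonglongrightarrow> \<Phi> b (xx g)"
    unfolding Pb by (intro bounded_linear.tendsto[OF matrix_vector_mul_bounded_linear] LIMSEQ_Suc u_conv assms)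
  ultimately show ?thesis using u_conv[OF bg] LIMSEQ_unique by metis
qed


lemma apow_est: assumes "h \<in> carrier G"
  shows "\<bar>(y (a [^] m \<otimes> h) - Ap m (y h))$1\<bar> \<le> real m * d \<and> \<bar>(y (a [^] m \<otimes> h) - Ap m (y h))$2\<bar> \<le> (real m)^2 * d"
proof (induction m)
  case 0 then show ?case using assms by (simp add: Ap_def vec2_eq)
next
  case (Suc m)
  define k where "k = a [^] m \<otimes> h"
  have kC: "k \<in> carrier G" using assms aC by (simp add: k_def)
  have e: "a [^] Suc m \<otimes> h = a \<otimes> k" using assms aC unfolding k_def by (metis nat_pow_Suc2 m_assoc nat_pow_closed)
  define \<delta> where "\<delta> = y (a \<otimes> k) - \<Phi> a (y k)"
  have nd: "norm \<delta> < d" using ya[OF kC] by (simp add: \<delta>_def)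
  have d1: "\<bar>\<delta>$1\<bar> < d" using component_le_norm_cart[of \<delta> 1] nd by linarith
  have d2: "\<bar>\<delta>$2\<bar> < d" using component_le_norm_cart[of \<delta> 2] nd by linarith
  have IH1: "\<bar>y k $1 - (y h)$1\<bar> \<le> real m * d" and IH2: "\<bar>y k $2 - (real m * (y h)$1 + (y h)$2)\<bar> \<le> (real m)^2 * d"
    using Suc by (auto simp: k_def Ap_def)
  have c1: "(y (a [^] Suc m \<otimes> h) - Ap (Suc m) (y h))$1 = \<delta>$1 + (y k $1 - (y h)$1)"
    unfolding e \<delta>_def by (simp add: Ap_def Phi_a)
  have c2: "(y (a [^] Suc m \<otimes> h) - Ap (Suc m) (y h))$2 = \<delta>$2 + (y k $1 - (y h)$1) + (y k $2 - (real m * (y h)$1 + (y h)$2))"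
    unfolding e \<delta>_def by (simp add: Ap_def Phi_a algebra_simps)
  have "\<bar>\<delta>$2 + (y k $1 - (y h)$1) + (y k $2 - (real m * (y h)$1 + (y h)$2))\<bar> \<le> d + real m * d + (real m)^2 * d"
    using d2 IH1 IH2 by linarith
  also have "\<dots> \<le> (real (Suc m))^2 * d" using dpos by (simp add: power2_eq_square algebra_simps)
  finally have "\<bar>(y (a [^] Suc m \<otimes> h) - Ap (Suc m) (y h))$2\<bar> \<le> (real (Suc m))^2 * d" using c2 by simp
  moreover have "\<bar>(y (a [^] Suc m \<otimes> h) - Ap (Suc m) (y h))$1\<bar> \<le> real (Suc m) * d"
    using c1 d1 IH1 by (simp add: algebra_simps)
  ultimately show ?case by simp
qed

lemma xx_a: assumes "g \<in> carrier G" and big: "lam > real n" shows "xx (a \<otimes> g) = \<Phi> a (xx g)"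
proof -
  have ag: "a \<otimes> g \<in> carrier G" using assms aC by simp
  have bnd: "norm (u (a \<otimes> g) j - \<Phi> a (u g j)) \<le> 2 * d * (real n / lam)^j" for j
  proof -
    define h where "h = b [^] j \<otimes> g"
    have hC: "h \<in> carrier G" using assms bC by (simp add: h_def)
    have e: "b [^] j \<otimes> (a \<otimes> g) = a [^] (n^j) \<otimes> h"
      using assms aC bC unfolding h_def by (metis bj_a m_assoc nat_pow_closed)
    define v where "v = y (a [^] (n^j) \<otimes> h) - Ap (n^j) (y h)"
    have "u (a \<otimes> g) j - \<Phi> a (u g j) = Bi j v"
      unfolding u_def e Phi_a_Bi v_def Bi_diff by (simp add: h_def)
    then have "norm (u (a \<otimes> g) j - \<Phi> a (u g j)) \<le> \<bar>v$1\<bar> / lam^j + \<bar>v$2\<bar> / (real n * lam)^j"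
      using Bi_norm by metis
    also have "\<dots> \<le> real (n^j) * d / lam^j + (real (n^j))^2 * d / (real n * lam)^j"
      using apow_est[OF hC, of "n^j"] lam1 n1 unfolding v_def
      by (intro add_mono divide_right_mono) auto
    also have "\<dots> = 2 * d * (real n / lam)^j"
      using lam1 n1 by (simp add: power_divide power_mult_distrib field_simps power2_eq_square)
    finally show ?thesis .
  qed
  have "(\<lambda>j. u (a \<otimes> g) j - \<Phi> a (u g j)) \<longlonglongrightarrow> 0"
  proof (rule Lim_null_comparison)
    show "\<forall>\<^sub>F j in sequentially. norm (u (a \<otimes> g) j - \<Phi> a (u g j)) \<le> 2 * d * (real n / lam)^j"
      using bnd by simp
    have "(\<lambda>j. (real n / lam)^j) \<longlonglongrightarrow> 0" using big n1 lam1 by (intro LIMSEQ_power_zero) auto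
    then show "(\<lambda>j. 2 * d * (real n / lam)^j) \<longlonglongrightarrow> 0" by (simp add: tendsto_mult_right_zero)
  qed
  moreover have "(\<lambda>j. \<Phi> a (u g j)) \<longlonglongrightarrow> \<Phi> a (xx g)"
    unfolding Pa by (intro bounded_linear.tendsto[OF matrix_vector_mul_bounded_linear] u_conv assms)
  ultimately have "(\<lambda>j. (u (a \<otimes> g) j - \<Phi> a (u g j)) + \<Phi> a (u g j)) \<longlonglongrightarrow> 0 + \<Phi> a (xx g)"
    by (rule tendsto_add)
  then have "u (a \<otimes> g) \<longlonglongrightarrow> \<Phi> a (xx g)" by simp
  then show ?thesis using u_conv[OF ag] LIMSEQ_unique by metis
qed


lemma shadow_exists: assumes big: "lam > real n"
  shows "\<exists>x. \<forall>g\<in>carrier G. norm (y g - \<Phi> g x) \<le> 2 * d / (lam - 1)"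
proof -
  have inv_case: "xx (inv c \<otimes> g2) = \<Phi> (inv c) (xx g2)"
    if cC: "c \<in> carrier G" and hc: "\<And>g. g \<in> carrier G \<Longrightarrow> xx (c \<otimes> g) = \<Phi> c (xx g)"
      and g2: "g2 \<in> carrier G" for c g2
  proof -
    have "xx g2 = xx (c \<otimes> (inv c \<otimes> g2))" using cC g2 by (simp add: m_assoc[symmetric])
    also have "\<dots> = \<Phi> c (xx (inv c \<otimes> g2))" using hc cC g2 by simp
    finally show ?thesis using Phi_inv_left[OF cC] by metis
  qed
  have P: "\<forall>g2\<in>carrier G. xx (g1 \<otimes> g2) = \<Phi> g1 (xx g2)" if "g1 \<in> carrier G" for g1
  proof (rule gen_induct[OF _ _ _ _ _ _ that])
    show "\<forall>g2\<in>carrier G. xx (\<one> \<otimes> g2) = \<Phi> \<one> (xx g2)" by (simp add: Phi_one)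
    show "\<forall>g2\<in>carrier G. xx (a \<otimes> g2) = \<Phi> a (xx g2)" using xx_a big by blast
    show "\<forall>g2\<in>carrier G. xx (b \<otimes> g2) = \<Phi> b (xx g2)" using xx_b by blast
    show "\<forall>g2\<in>carrier G. xx (inv a \<otimes> g2) = \<Phi> (inv a) (xx g2)" using inv_case[OF aC] xx_a big by blast
    show "\<forall>g2\<in>carrier G. xx (inv b \<otimes> g2) = \<Phi> (inv b) (xx g2)" using inv_case[OF bC] xx_b by blast
    fix g1 g1' assume C: "g1 \<in> carrier G" "g1' \<in> carrier G"
      and H: "\<forall>g2\<in>carrier G. xx (g1 \<otimes> g2) = \<Phi> g1 (xx g2)" "\<forall>g2\<in>carrier G. xx (g1' \<otimes> g2) = \<Phi> g1' (xx g2)"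
    show "\<forall>g2\<in>carrier G. xx (g1 \<otimes> g1' \<otimes> g2) = \<Phi> (g1 \<otimes> g1') (xx g2)"
      using C H by (simp add: m_assoc Phi_mult)
  qed
  show ?thesis
  proof (intro exI ballI)
    fix g assume gC: "g \<in> carrier G"
    have "xx g = \<Phi> g (xx \<one>)" using P[OF gC] gC by (metis one_closed r_one)
    then show "norm (y g - \<Phi> g (xx \<one>)) \<le> 2 * d / (lam - 1)" using xx_close[OF gC] by (simp add: norm_minus_commute)
  qed
qed

end

lemma part2: assumes big: "lam > real n" shows "shadowing_property G {a, b, inv a, inv b} \<Phi>"
  unfolding shadowing_property_def
proof (intro allI impI)
  fix \<epsilon> :: real assume \<epsilon>: "\<epsilon> > 0"
  define d where "d = \<epsilon> * (lam - 1) / 4"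
  have dpos: "d > 0" using lam1 \<epsilon> by (simp add: d_def)
  show "\<exists>d>0. \<forall>y. pseudotrajectory G {a, b, inv a, inv b} \<Phi> d y \<longrightarrow> (\<exists>x. \<forall>g\<in>carrier G. dist (y g) (\<Phi> g x) < \<epsilon>)"
  proof (rule exI[of _ d], intro conjI allI impI)
    show "d > 0" by (rule dpos)
    fix y assume pt: "pseudotrajectory G {a, b, inv a, inv b} \<Phi> d y"
    have ya: "\<And>g. g \<in> carrier G \<Longrightarrow> norm (y (a \<otimes> g) - \<Phi> a (y g)) < d"
      using pt unfolding pseudotrajectory_def dist_norm by auto
    have yb: "\<And>g. g \<in> carrier G \<Longrightarrow> norm (y (b \<otimes> g) - \<Phi> b (y g)) < d"
      using pt unfolding pseudotrajectory_def dist_norm by auto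
    obtain x where x: "\<forall>g\<in>carrier G. norm (y g - \<Phi> g x) \<le> 2 * d / (lam - 1)"
      using shadow_exists[OF dpos ya yb big] by blast
    have "2 * d / (lam - 1) = \<epsilon> / 2" using lam1 by (simp add: d_def field_simps)
    then show "\<exists>x. \<forall>g\<in>carrier G. dist (y g) (\<Phi> g x) < \<epsilon>"
      using x \<epsilon> by (intro exI[of _ x]) (auto simp: dist_norm)
  qed
qed

definition M :: "int \<Rightarrow> real \<Rightarrow> real^2 \<Rightarrow> real^2" where
  "M k s v = vector [lam powr k * v$1, (real n * lam) powr k * (s * v$1 + v$2)]"

lemma M_comp: "M k s (M k' s' v) = M (k + k') (s * real n powr (- k') + s') v"
proof -
  have n0: "real n > 0" using n1 by simp
  have l0: "lam > 0" using lam1 by simp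
  have e3: "lam powr k' = (real n * lam) powr k' * real n powr (- k')"
    using n0 l0 by (simp add: powr_mult powr_minus_divide)
  have c1: "(M k s (M k' s' v))$1 = (M (k + k') (s * real n powr (- k') + s') v)$1"
    by (simp add: M_def powr_add)
  have c2: "(M k s (M k' s' v))$2 = (M (k + k') (s * real n powr (- k') + s') v)$2"
    unfolding M_def by (simp add: e3 powr_add algebra_simps)
  show ?thesis using c1 c2 by (simp add: vec2_eq)
qed

lemma M_00: "M 0 0 v = v" using n1 lam1 by (simp add: M_def vec2_eq)

lemma Phi_M_a: "\<Phi> a v = M 0 1 v" using n1 lam1 by (simp add: M_def vec2_eq Phi_a)
lemma Phi_M_b: "\<Phi> b v = M 1 0 v" using n1 lam1 by (simp add: M_def vec2_eq Phi_b)
lemma Phi_M_inva: "\<Phi> (inv a) v = M 0 (-1) v" using n1 lam1 by (simp add: M_def vec2_eq Phi_inva)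
lemma Phi_M_invb: "\<Phi> (inv b) v = M (-1) 0 v" using n1 lam1
  by (simp add: M_def vec2_eq Phi_invb powr_minus_divide)

lemma rep: assumes "g \<in> carrier G" shows "\<exists>k s. \<forall>v. \<Phi> g v = M k s v"
proof (rule gen_induct[where P="\<lambda>g. \<exists>k s. \<forall>v. \<Phi> g v = M k s v", OF _ _ _ _ _ _ assms])
  show "\<exists>k s. \<forall>v. \<Phi> \<one> v = M k s v" using M_00 Phi_one by metis
  show "\<exists>k s. \<forall>v. \<Phi> a v = M k s v" using Phi_M_a by metis
  show "\<exists>k s. \<forall>v. \<Phi> b v = M k s v" using Phi_M_b by metis
  show "\<exists>k s. \<forall>v. \<Phi> (inv a) v = M k s v" using Phi_M_inva by metis
  show "\<exists>k s. \<forall>v. \<Phi> (inv b) v = M k s v" using Phi_M_invb by metis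
  fix g1 g2 assume C: "g1 \<in> carrier G" "g2 \<in> carrier G"
    and H: "\<exists>k s. \<forall>v. \<Phi> g1 v = M k s v" "\<exists>k s. \<forall>v. \<Phi> g2 v = M k s v"
  then obtain k s k' s' where "\<forall>v. \<Phi> g1 v = M k s v" "\<forall>v. \<Phi> g2 v = M k' s' v" by blast
  then show "\<exists>k s. \<forall>v. \<Phi> (g1 \<otimes> g2) v = M k s v" using C by (metis Phi_mult M_comp)
qed

definition yy :: "real \<Rightarrow> 'g \<Rightarrow> real^2" where
  "yy \<eta> g = (let s = (\<Phi> g (vector [1,0]))$2 / (\<Phi> g (vector [0,1]))$2
     in \<Phi> g (vector [\<eta> * cos s, \<eta> * (sin s - s * cos s)]))"

lemma yy_rep: assumes "\<forall>v. \<Phi> g v = M k s v"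
  shows "yy \<eta> g = vector [\<eta> * lam powr k * cos s, \<eta> * (real n * lam) powr k * sin s]"
proof -
  have Q: "(real n * lam) powr k > 0" using n1 lam1 by simp
  have r: "(\<Phi> g (vector [1,0]))$2 / (\<Phi> g (vector [0,1]))$2 = s"
    using assms Q by (simp add: M_def)
  show ?thesis unfolding yy_def Let_def r using assms by (simp add: M_def vec2_eq algebra_simps)
qed

lemma pt_step:
  assumes gC: "g \<in> carrier G" and eta: "\<eta> > 0" and small: "lam \<le> real n"
    and sig: "\<sigma> \<in> {a, b, inv a, inv b}"
  shows "norm (yy \<eta> (\<sigma> \<otimes> g) - \<Phi> \<sigma> (yy \<eta> g)) \<le> 5 * \<eta>"
proof -
  obtain k s where ks: "\<forall>v. \<Phi> g v = M k s v" using rep[OF gC] by blast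
  define P where "P = lam powr k"
  define Q where "Q = (real n * lam) powr k"
  define h where "h = real n powr (- k)"
  have P0: "P > 0" using lam1 by (simp add: P_def)
  have Q0: "Q > 0" using lam1 n1 by (simp add: Q_def)
  have h0: "h > 0" using n1 by (simp add: h_def)
  have QhP: "Q * h = P" using lam1 n1 by (simp add: P_def Q_def h_def powr_mult powr_minus_divide)
  have cases: "(P * h \<le> 1) \<or> (P \<le> 1 \<and> Q \<le> 1)"
  proof (cases "k \<ge> 0")
    case True
    have "P \<le> real n powr k" unfolding P_def using True lam1 small by (intro powr_mono2) auto
    then have "P * h \<le> 1" using n1 by (simp add: h_def powr_minus_divide divide_le_eq)
    then show ?thesis by simp
  next
    case False
    have "P \<le> 1" unfolding P_def using False lam1 by (intro less_imp_le[OF powr_less_one]) auto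
    moreover have "Q \<le> 1" unfolding Q_def using False lam1 n1
      by (intro less_imp_le[OF powr_less_one] less_1_mult) auto
    ultimately show ?thesis by simp
  qed
  have yyg: "yy \<eta> g = vector [\<eta> * P * cos s, \<eta> * Q * sin s]" using yy_rep[OF ks] by (simp add: P_def Q_def)
  have mulrep: "\<forall>v. \<Phi> (c \<otimes> g) v = M (kc + k) (sc * h + s) v" if "c \<in> carrier G" "\<And>v. \<Phi> c v = M kc sc v" for c kc sc
    using that gC ks by (simp add: Phi_mult M_comp h_def)
  have E: "\<eta> * P * \<bar>cos (s + t) - cos s\<bar> + \<eta> * Q * \<bar>sin (s + t) - sin s - t * cos s\<bar> \<le> 5 * \<eta>" if "\<bar>t\<bar> = h" for t
  proof -
    have "P * \<bar>cos (s + t) - cos s\<bar> \<le> 2" "Q * \<bar>sin (s + t) - sin s - t * cos s\<bar> \<le> 3"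
      using est[OF P0 h0 Q0 QhP that cases] by auto
    then have "\<eta> * (P * \<bar>cos (s + t) - cos s\<bar>) \<le> \<eta> * 2" "\<eta> * (Q * \<bar>sin (s + t) - sin s - t * cos s\<bar>) \<le> \<eta> * 3"
      using eta by (auto intro: mult_left_mono)
    then show ?thesis by (simp add: mult.assoc)
  qed
  consider "\<sigma> = a" | "\<sigma> = b" | "\<sigma> = inv a" | "\<sigma> = inv b" using sig by blast
  then show ?thesis
  proof cases
    case 1
    have "yy \<eta> (a \<otimes> g) = vector [\<eta> * P * cos (h + s), \<eta> * Q * sin (h + s)]"
      using yy_rep[OF mulrep[OF aC Phi_M_a]] by (simp add: P_def Q_def)
    then have "yy \<eta> (a \<otimes> g) - \<Phi> a (yy \<eta> g) =
        vector [\<eta> * P * (cos (s + h) - cos s), \<eta> * Q * (sin (s + h) - sin s - h * cos s)]"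
      by (simp add: yyg Phi_a vec2_eq algebra_simps flip: QhP)
    then have "norm (yy \<eta> (a \<otimes> g) - \<Phi> a (yy \<eta> g)) \<le> \<eta> * P * \<bar>cos (s + h) - cos s\<bar> + \<eta> * Q * \<bar>sin (s + h) - sin s - h * cos s\<bar>"
      using norm2_le[of "yy \<eta> (a \<otimes> g) - \<Phi> a (yy \<eta> g)"] P0 Q0 eta by (simp add: abs_mult)
    then show ?thesis using 1 E[of h] h0 by simp
  next
    case 3
    have "yy \<eta> (inv a \<otimes> g) = vector [\<eta> * P * cos (- h + s), \<eta> * Q * sin (- h + s)]"
      using yy_rep[OF mulrep[OF inv_closed[OF aC] Phi_M_inva]] by (simp add: P_def Q_def)
    then have "yy \<eta> (inv a \<otimes> g) - \<Phi> (inv a) (yy \<eta> g) =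
        vector [\<eta> * P * (cos (s + - h) - cos s), \<eta> * Q * (sin (s + - h) - sin s - (- h) * cos s)]"
      by (simp add: yyg Phi_inva vec2_eq algebra_simps flip: QhP)
    then have "norm (yy \<eta> (inv a \<otimes> g) - \<Phi> (inv a) (yy \<eta> g)) \<le> \<eta> * P * \<bar>cos (s + - h) - cos s\<bar> + \<eta> * Q * \<bar>sin (s + - h) - sin s - (- h) * cos s\<bar>"
      using norm2_le[of "yy \<eta> (inv a \<otimes> g) - \<Phi> (inv a) (yy \<eta> g)"] P0 Q0 eta by (simp add: abs_mult)
    then show ?thesis using 3 E[of "- h"] h0 by simp
  next
    case 2
    have "yy \<eta> (b \<otimes> g) = vector [\<eta> * lam powr (1 + k) * cos s, \<eta> * (real n * lam) powr (1 + k) * sin s]"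
      using yy_rep[OF mulrep[OF bC Phi_M_b]] by simp
    then have "yy \<eta> (b \<otimes> g) = \<Phi> b (yy \<eta> g)"
      using lam1 n1 by (simp add: yyg Phi_b vec2_eq powr_add P_def Q_def)
    then show ?thesis using 2 eta by simp
  next
    case 4
    have "yy \<eta> (inv b \<otimes> g) = vector [\<eta> * lam powr (- 1 + k) * cos s, \<eta> * (real n * lam) powr (- 1 + k) * sin s]"
      using yy_rep[OF mulrep[OF inv_closed[OF bC] Phi_M_invb]] by simp
    then have "yy \<eta> (inv b \<otimes> g) = \<Phi> (inv b) (yy \<eta> g)"
      using lam1 n1 by (simp add: yyg Phi_invb vec2_eq powr_diff P_def Q_def)
    then show ?thesis using 4 eta by simp
  qed
qed

lemma Phi_pow_b: "\<Phi> (b [^] (j::nat)) v = M (int j) 0 v"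
proof (induction j arbitrary: v)
  case 0 then show ?case by (simp add: Phi_one M_00)
next
  case (Suc j)
  have "\<Phi> (b [^] Suc j) v = \<Phi> (b [^] j) (\<Phi> b v)" using bC by (simp add: Phi_mult)
  also have "\<dots> = M (int j + 1) 0 v" using Suc by (simp add: Phi_M_b M_comp)
  finally show ?case by (simp add: add.commute)
qed

lemma part1: assumes small: "lam \<le> real n" shows "\<not> shadowing_property G {a, b, inv a, inv b} \<Phi>"
proof
  assume "shadowing_property G {a, b, inv a, inv b} \<Phi>"
  then obtain d where d: "d > 0" and H: "\<And>y. pseudotrajectory G {a, b, inv a, inv b} \<Phi> d y \<Longrightarrow> (\<exists>x. \<forall>g\<in>carrier G. dist (y g) (\<Phi> g x) < 1)"
    unfolding shadowing_property_def by (meson zero_less_one)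
  define \<eta> where "\<eta> = d / 6"
  have eta: "\<eta> > 0" using d by (simp add: \<eta>_def)
  have "pseudotrajectory G {a, b, inv a, inv b} \<Phi> d (yy \<eta>)"
    unfolding pseudotrajectory_def
  proof (intro ballI)
    fix \<sigma> g assume "\<sigma> \<in> {a, b, inv a, inv b}" "g \<in> carrier G"
    then have "norm (yy \<eta> (\<sigma> \<otimes> g) - \<Phi> \<sigma> (yy \<eta> g)) \<le> 5 * \<eta>" using pt_step eta small by blast
    then show "dist (yy \<eta> (\<sigma> \<otimes> g)) (\<Phi> \<sigma> (yy \<eta> g)) < d" using d by (simp add: dist_norm \<eta>_def)
  qed
  then obtain x where x: "\<forall>g\<in>carrier G. dist (yy \<eta> g) (\<Phi> g x) < 1" using H by blast
  have c1: "\<bar>lam ^ j * (\<eta> - x$1)\<bar> < 1" for j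
  proof -
    have g: "b [^] j \<in> carrier G" using bC by simp
    have "yy \<eta> (b [^] j) = vector [\<eta> * lam powr (int j) * cos 0, \<eta> * (real n * lam) powr (int j) * sin 0]"
      using yy_rep[of "b [^] j"] Phi_pow_b by presburger
    then have "(yy \<eta> (b [^] j) - \<Phi> (b [^] j) x)$1 = lam ^ j * (\<eta> - x$1)"
      using lam1 by (simp add: Phi_pow_b M_def powr_realpow algebra_simps)
    moreover have "\<bar>(yy \<eta> (b [^] j) - \<Phi> (b [^] j) x)$1\<bar> < 1"
      using x g component_le_norm_cart[of "yy \<eta> (b [^] j) - \<Phi> (b [^] j) x" 1] by (force simp: dist_norm)
    ultimately show ?thesis by simp
  qed
  have c2: "\<bar>lam ^ j * (\<eta> * cos 1 - x$1)\<bar> < 1" for j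
  proof -
    have g: "b [^] j \<otimes> a \<in> carrier G" using aC bC by simp
    have r: "\<forall>v. \<Phi> (b [^] j \<otimes> a) v = M (int j) 1 v"
      using aC bC by (simp add: Phi_mult Phi_pow_b Phi_M_a M_comp)
    have "yy \<eta> (b [^] j \<otimes> a) = vector [\<eta> * lam powr (int j) * cos 1, \<eta> * (real n * lam) powr (int j) * sin 1]"
      using yy_rep[OF r] by simp
    then have "(yy \<eta> (b [^] j \<otimes> a) - \<Phi> (b [^] j \<otimes> a) x)$1 = lam ^ j * (\<eta> * cos 1 - x$1)"
      using lam1 r by (simp add: M_def powr_realpow algebra_simps)
    moreover have "\<bar>(yy \<eta> (b [^] j \<otimes> a) - \<Phi> (b [^] j \<otimes> a) x)$1\<bar> < 1"
      using x g component_le_norm_cart[of "yy \<eta> (b [^] j \<otimes> a) - \<Phi> (b [^] j \<otimes> a) x" 1] by (force simp: dist_norm)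
    ultimately show ?thesis by simp
  qed
  have cos1: "cos 1 < (1::real)" using cos_monotone_0_pi[of 0 1] pi_gt3 by simp
  define c where "c = \<eta> * (1 - cos 1)"
  have c0: "c > 0" using eta cos1 by (simp add: c_def)
  obtain j where j: "2 / c < lam ^ j" using real_arch_pow[OF lam1] by blast
  have "lam ^ j * c < 2"
  proof -
    have "lam ^ j * c = lam ^ j * (\<eta> - x$1) - lam ^ j * (\<eta> * cos 1 - x$1)" by (simp add: c_def algebra_simps)
    then show ?thesis using c1[of j] c2[of j] by linarith
  qed
  moreover have "2 < lam ^ j * c" using j c0 by (simp add: divide_less_eq)
  ultimately show False by linarith
qed

end

theorem theorem2:
  fixes G :: "('g, 'm) monoid_scheme" and n :: nat and lam :: real and a b :: 'g
    and \<Phi> :: "'g \<Rightarrow> real^2 \<Rightarrow> real^2"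
  assumes "n > 1" and "lam > 1"
    and "is_BS1n G n a b"
    and "group_action_on G \<Phi>"
    and "\<And>x. \<Phi> a x = matA *v x"
    and "\<And>x. \<Phi> b x = matB lam n *v x"
  shows "(lam \<le> real n \<longrightarrow> \<not> shadowing_property G {a, b, inv\<^bsub>G\<^esub> a, inv\<^bsub>G\<^esub> b} \<Phi>)
       \<and> (lam > real n \<longrightarrow> shadowing_property G {a, b, inv\<^bsub>G\<^esub> a, inv\<^bsub>G\<^esub> b} \<Phi>)"
proof -
  have g: "group G" using assms(3) unfolding is_BS1n_def by blast
  have B: "bs G n lam a b \<Phi>" unfolding bs_def bs_axioms_def using g assms by blast
  show ?thesis using bs.part1[OF B] bs.part2[OF B] by auto
qed

end
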